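(* Let $L$ be an $\omega$-regular language that is tDCW-positive. Then every two nice tDCWs $\mathcal{A}_1,\mathcal{A}_2$ recognizing $L$ that are minimal (no tDCW recognizing $L$ has fewer states) are safe isomorphic.
   Context: A tNCW is $\mathcal{A}=\langle\Sigma,Q,q_0,\delta,\alpha\rangle$: finite alphabet $\Sigma$, finite state set $Q$, initial state $q_0$, transition function $\delta:Q\times\Sigma\to 2^Q\setminus\{\emptyset\}$ with transition relation $\Delta=\{\langle q,\sigma,s\rangle:s\in\delta(q,\sigma)\}$, and $\alpha\subseteq\Delta$; its size is $|Q|$. $\alpha$-transitions are those in $\alpha$, $\bar\alpha$-transitions those in $\Delta\setminus\alpha$; $\delta^{\bar\alpha}(q,\sigma)$ denotes the $\sigma$-successors via $\bar\alpha$-transitions. A run on $w=\sigma_1\sigma_2\cdots$ is $r_0r_1\cdots$ with $r_0=q_0$, $r_{i+1}\in\delta(r_i,\sigma_{i+1})$; accepting iff it traverses $\alpha$-transitions only finitely often; $L(\mathcal{A})$ the accepted language. A tDCW is a tNCW with $|\delta(q,\sigma)|=1$ for all $q,\sigma$. $\mathcal{A}^q$ is $\mathcal{A}$ with initial state $q$; $q\sim s$ iff $L(\mathcal{A}^q)=L(\mathcal{A}^s)$. $\mathcal{A}$ is GFG if there is $f:\Sigma^*\to Q$ with $f(\epsilon)=q_0$, $\langle f(u),\sigma,f(u\sigma)\rangle\in\Delta$ for all $u,\sigma$, and for every $w\in L(\mathcal{A})$ the run $f(w[1,0]),f(w[1,1]),\dots$ accepting; $q$ is GFG if $\mathcal{A}^q$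 is. Nice: all states reachable and GFG, semantically deterministic (all $\sigma$-successors of a state pairwise $\sim$), safe deterministic ($|\delta^{\bar\alpha}(q,\sigma)|\le1$), and normal (a path of $\bar\alpha$-transitions from $q$ to $s$ implies one from $s$ to $q$). An $\omega$-regular language $L$ is tDCW-positive if the minimal number of states of a tDCW recognizing $L$ is not larger than the minimal number of states of a GFG-tNCW recognizing $L$. Two tNCWs $\mathcal{A},\mathcal{B}$ are safe isomorphic if there is a bijection $\kappa:Q_\mathcal{A}\to Q_\mathcal{B}$ such that for all $q,q'\in Q_\mathcal{A}$ and $\sigma\in\Sigma$: $q'\in\delta^{\bar\alpha}_\mathcal{A}(q,\sigma)$ iff $\kappa(q')\in\delta^{\bar\alpha}_\mathcal{B}(\kappa(q),\sigma)$. *)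

theory Defs
  imports Main
begin

text \<open>Automata over a finite alphabet, given as a finite type 'a.
  Infinite words are functions nat => 'a; w i is the (i+1)-th letter.\<close>

record ('s, 'a) tNCW =
  states :: "'s set"
  init   :: 's
  trans  :: "'s \<Rightarrow> 'a \<Rightarrow> 's set"
  acc    :: "('s \<times> 'a \<times> 's) set"

definition Delta :: "('s, 'a) tNCW \<Rightarrow> ('s \<times> 'a \<times> 's) set" where
  "Delta A = {(q, \<sigma>, s). q \<in> states A \<and> s \<in> trans A q \<sigma>}"

definition wf_aut :: "('s, 'a) tNCW \<Rightarrow> bool" where
  "wf_aut A \<longleftrightarrow> finite (states A) \<and> init A \<in> states A \<and>
     (\<forall>q \<in> states A. \<forall>\<sigma>. trans A q \<sigma> \<noteq> {} \<and> trans A q \<sigma> \<subseteq> states A) \<and>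
     acc A \<subseteq> Delta A"

definition is_run :: "('s, 'a) tNCW \<Rightarrow> (nat \<Rightarrow> 'a) \<Rightarrow> (nat \<Rightarrow> 's) \<Rightarrow> bool" where
  "is_run A w r \<longleftrightarrow> r 0 = init A \<and> (\<forall>i. r (Suc i) \<in> trans A (r i) (w i))"

text \<open>co-Buechi acceptance: alpha-transitions are traversed only finitely often.\<close>
definition cobuchi_accepting :: "('s, 'a) tNCW \<Rightarrow> (nat \<Rightarrow> 'a) \<Rightarrow> (nat \<Rightarrow> 's) \<Rightarrow> bool" where
  "cobuchi_accepting A w r \<longleftrightarrow> finite {i. (r i, w i, r (Suc i)) \<in> acc A}"

definition lang :: "('s, 'a) tNCW \<Rightarrow> (nat \<Rightarrow> 'a) set" where
  "lang A = {w. \<exists>r. is_run A w r \<and> cobuchi_accepting A w r}"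

definition with_init :: "('s, 'a) tNCW \<Rightarrow> 's \<Rightarrow> ('s, 'a) tNCW" where
  "with_init A q = A\<lparr>init := q\<rparr>"

definition is_tDCW :: "('s, 'a) tNCW \<Rightarrow> bool" where
  "is_tDCW A \<longleftrightarrow> wf_aut A \<and> (\<forall>q \<in> states A. \<forall>\<sigma>. card (trans A q \<sigma>) = 1)"

definition prefix_word :: "(nat \<Rightarrow> 'a) \<Rightarrow> nat \<Rightarrow> 'a list" where
  "prefix_word w i = map w [0..<i]"

definition is_GFG :: "('s, 'a) tNCW \<Rightarrow> bool" where
  "is_GFG A \<longleftrightarrow> (\<exists>f :: 'a list \<Rightarrow> 's.
     f [] = init A \<and>
     (\<forall>u \<sigma>. (f u, \<sigma>, f (u @ [\<sigma>])) \<in> Delta A) \<and>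
     (\<forall>w \<in> lang A. cobuchi_accepting A w (\<lambda>i. f (prefix_word w i))))"

definition GFG_state :: "('s, 'a) tNCW \<Rightarrow> 's \<Rightarrow> bool" where
  "GFG_state A q \<longleftrightarrow> is_GFG (with_init A q)"

definition edges :: "('s, 'a) tNCW \<Rightarrow> ('s \<times> 's) set" where
  "edges A = {(q, s). \<exists>\<sigma>. (q, \<sigma>, s) \<in> Delta A}"

definition safe_edges :: "('s, 'a) tNCW \<Rightarrow> ('s \<times> 's) set" where
  "safe_edges A = {(q, s). \<exists>\<sigma>. (q, \<sigma>, s) \<in> Delta A - acc A}"

definition safe_succ :: "('s, 'a) tNCW \<Rightarrow> 's \<Rightarrow> 'a \<Rightarrow> 's set" where
  "safe_succ A q \<sigma> = {s. (q, \<sigma>, s) \<in> Delta A - acc A}"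

definition equiv_states :: "('s, 'a) tNCW \<Rightarrow> 's \<Rightarrow> 's \<Rightarrow> bool" where
  "equiv_states A q s \<longleftrightarrow> lang (with_init A q) = lang (with_init A s)"

definition nice :: "('s, 'a) tNCW \<Rightarrow> bool" where
  "nice A \<longleftrightarrow>
     (\<forall>q \<in> states A. (init A, q) \<in> (edges A)\<^sup>* \<and> GFG_state A q) \<and>
     (\<forall>q \<in> states A. \<forall>\<sigma>. \<forall>s \<in> trans A q \<sigma>. \<forall>s' \<in> trans A q \<sigma>. equiv_states A s s') \<and>
     (\<forall>q \<in> states A. \<forall>\<sigma>. card (safe_succ A q \<sigma>) \<le> 1) \<and>
     (\<forall>q \<in> states A. \<forall>s \<in> states A. (q, s) \<in> (safe_edges A)\<^sup>* \<longrightarrow> (s, q) \<in> (safe_edges A)\<^sup>*)"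

definition buchi_lang :: "('s, 'a) tNCW \<Rightarrow> (nat \<Rightarrow> 'a) set" where
  "buchi_lang A = {w. \<exists>r. is_run A w r \<and> infinite {i. (r i, w i, r (Suc i)) \<in> acc A}}"

definition omega_regular :: "(nat \<Rightarrow> 'a) set \<Rightarrow> bool" where
  "omega_regular L \<longleftrightarrow> (\<exists>A :: (nat, 'a) tNCW. wf_aut A \<and> buchi_lang A = L)"

text \<open>Minimal sizes; automata of arbitrary finite state type are represented
  up to renaming by automata with natural-number states.\<close>
definition min_tDCW_size :: "(nat \<Rightarrow> 'a) set \<Rightarrow> nat" where
  "min_tDCW_size L = (LEAST n. \<exists>D :: (nat, 'a) tNCW. is_tDCW D \<and> lang D = L \<and> card (states D) = n)"

definition min_GFG_size :: "(nat \<Rightarrow> 'a) set \<Rightarrow> nat" where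
  "min_GFG_size L = (LEAST n. \<exists>B :: (nat, 'a) tNCW. wf_aut B \<and> is_GFG B \<and> lang B = L \<and> card (states B) = n)"

definition tDCW_positive :: "(nat \<Rightarrow> 'a) set \<Rightarrow> bool" where
  "tDCW_positive L \<longleftrightarrow> min_tDCW_size L \<le> min_GFG_size L"

definition safe_isomorphic :: "('s, 'a) tNCW \<Rightarrow> ('t, 'a) tNCW \<Rightarrow> bool" where
  "safe_isomorphic A B \<longleftrightarrow> (\<exists>\<kappa>. bij_betw \<kappa> (states A) (states B) \<and>
     (\<forall>q \<in> states A. \<forall>q' \<in> states A. \<forall>\<sigma>.
        q' \<in> safe_succ A q \<sigma> \<longleftrightarrow> \<kappa> q' \<in> safe_succ B (\<kappa> q) \<sigma>))"

end

theory Submission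
  imports Defs
begin


definition dt :: "('s,'a) tNCW \<Rightarrow> 's \<Rightarrow> 'a \<Rightarrow> 's" where
  "dt A q \<sigma> = the_elem (trans A q \<sigma>)"
definition dl :: "('s,'a) tNCW \<Rightarrow> 's \<Rightarrow> 'a list \<Rightarrow> 's" where
  "dl A q u = foldl (dt A) q u"
definition sf :: "('s,'a) tNCW \<Rightarrow> 's \<Rightarrow> 'a \<Rightarrow> bool" where
  "sf A q \<sigma> \<longleftrightarrow> (q, \<sigma>, dt A q \<sigma>) \<notin> acc A"
definition rn :: "('s,'a) tNCW \<Rightarrow> 's \<Rightarrow> (nat \<Rightarrow> 'a) \<Rightarrow> nat \<Rightarrow> 's" where
  "rn A q w n = dl A q (prefix_word w n)"
primrec sw :: "('s,'a) tNCW \<Rightarrow> 's \<Rightarrow> 'a list \<Rightarrow> bool" where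
  "sw A q [] = True"
| "sw A q (\<sigma> # u) = (sf A q \<sigma> \<and> sw A (dt A q \<sigma>) u)"
definition Ls :: "('s,'a) tNCW \<Rightarrow> 's \<Rightarrow> (nat \<Rightarrow> 'a) set" where
  "Ls A q = {w. \<forall>i. sf A (rn A q w i) (w i)}"
definition Ld :: "('s,'a) tNCW \<Rightarrow> 's \<Rightarrow> (nat \<Rightarrow> 'a) set" where
  "Ld A q = {w. finite {i. \<not> sf A (rn A q w i) (w i)}}"
definition pr :: "('s,'a) tNCW \<Rightarrow> 's \<Rightarrow> (nat \<Rightarrow> 'a) set \<times> (nat \<Rightarrow> 'a) set" where
  "pr A q = (Ld A q, Ls A q)"
definition le :: "('s,'a) tNCW \<Rightarrow> 's \<Rightarrow> ('t,'a) tNCW \<Rightarrow> 't \<Rightarrow> bool" where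
  "le A x B z \<longleftrightarrow> Ld A x = Ld B z \<and> Ls A x \<subseteq> Ls B z"
definition SR :: "('s,'a) tNCW \<Rightarrow> 's \<Rightarrow> 's set" where
  "SR A x = {dl A x u | u. sw A x u}"
definition prec :: "('s,'a) tNCW \<Rightarrow> 's \<Rightarrow> ('t,'a) tNCW \<Rightarrow> 't \<Rightarrow> bool" where
  "prec A x B z \<longleftrightarrow> (\<forall>x'\<in>SR A x. \<exists>z'\<in>SR B z. le A x' B z')"
definition cns :: "'a \<Rightarrow> (nat \<Rightarrow> 'a) \<Rightarrow> nat \<Rightarrow> 'a" where
  "cns \<sigma> v = (\<lambda>i. case i of 0 \<Rightarrow> \<sigma> | Suc j \<Rightarrow> v j)"
definition per :: "'a list \<Rightarrow> nat \<Rightarrow> 'a" where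
  "per c = (\<lambda>i. c ! (i mod length c))"

lemma trans_eq:
  assumes "is_tDCW A" "q \<in> states A"
  shows "trans A q \<sigma> = {dt A q \<sigma>}"
proof -
  have "card (trans A q \<sigma>) = 1" using assms unfolding is_tDCW_def by blast
  then obtain x where "trans A q \<sigma> = {x}" by (meson card_1_singletonE)
  then show ?thesis unfolding dt_def by simp
qed

lemma dt_in:
  assumes "is_tDCW A" "q \<in> states A"
  shows "dt A q \<sigma> \<in> states A"
proof -
  have "trans A q \<sigma> \<subseteq> states A" using assms unfolding is_tDCW_def wf_aut_def by blast
  then show ?thesis using trans_eq[OF assms] by auto
qed

lemma dl_Nil[simp]: "dl A q [] = q" by (simp add: dl_def)
lemma dl_Cons[simp]: "dl A q (\<sigma> # u) = dl A (dt A q \<sigma>) u" by (simp add: dl_def)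
lemma dl_append[simp]: "dl A q (u @ v) = dl A (dl A q u) v" by (simp add: dl_def)

lemma dl_in:
  assumes "is_tDCW A" "q \<in> states A"
  shows "dl A q u \<in> states A"
  using assms(2) by (induction u arbitrary: q) (auto simp: dt_in[OF assms(1)])

lemma prefix_Suc: "prefix_word w (Suc n) = prefix_word w n @ [w n]"
  by (simp add: prefix_word_def)

lemma rn_0[simp]: "rn A q w 0 = q" by (simp add: rn_def prefix_word_def)
lemma rn_Suc: "rn A q w (Suc n) = dt A (rn A q w n) (w n)"
  by (simp add: rn_def prefix_Suc)

lemma rn_in:
  assumes "is_tDCW A" "q \<in> states A"
  shows "rn A q w n \<in> states A"
  unfolding rn_def using dl_in[OF assms] .

lemma rn_shift: "rn A q w (m + n) = rn A (rn A q w m) (\<lambda>i. w (m + i)) n"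
  by (induction n) (simp_all add: rn_Suc)

lemma sw_append[simp]: "sw A q (u @ v) = (sw A q u \<and> sw A (dl A q u) v)"
  by (induction u arbitrary: q) auto

lemma sw_prefix: "sw A q (prefix_word w n) \<longleftrightarrow> (\<forall>i<n. sf A (rn A q w i) (w i))"
proof (induction n)
  case 0 then show ?case by (simp add: prefix_word_def)
next
  case (Suc n)
  show ?case using Suc by (auto simp: prefix_Suc rn_def less_Suc_eq)
qed

lemma Ls_sub_Ld: "Ls A q \<subseteq> Ld A q"
  unfolding Ls_def Ld_def by auto

lemma finite_shift_iff: "finite {i::nat. P i} \<longleftrightarrow> finite {j. P (N + j)}"
proof
  assume "finite {i. P i}"
  moreover have "inj (\<lambda>j::nat. N + j)" by (simp add: inj_def)
  ultimately have "finite ((\<lambda>j. N + j) -` {i. P i})" by (rule finite_vimageI)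
  then show "finite {j. P (N + j)}" by (simp add: vimage_def)
next
  assume f: "finite {j. P (N + j)}"
  have "{i. P i} \<subseteq> {..<N} \<union> (\<lambda>j. N + j) ` {j. P (N + j)}"
  proof
    fix i assume "i \<in> {i. P i}"
    then show "i \<in> {..<N} \<union> (\<lambda>j. N + j) ` {j. P (N + j)}"
      by (cases "i < N") (auto intro!: image_eqI[where x="i - N"])
  qed
  then show "finite {i. P i}" using f by (meson finite_Un finite_imageI finite_lessThan finite_subset)
qed

lemma Ld_shift: "w \<in> Ld A q \<longleftrightarrow> (\<lambda>i. w (N + i)) \<in> Ld A (rn A q w N)"
  unfolding Ld_def using finite_shift_iff[where P="\<lambda>i. \<not> sf A (rn A q w i) (w i)" and N=N]
  by (simp add: rn_shift)

lemma cns_0[simp]: "cns \<sigma> v 0 = \<sigma>" and cns_Suc[simp]: "cns \<sigma> v (Suc j) = v j"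
  by (simp_all add: cns_def)

lemma rn_cns: "rn A q (cns \<sigma> v) (Suc j) = rn A (dt A q \<sigma>) v j"
proof -
  have "rn A q (cns \<sigma> v) (1 + j) = rn A (rn A q (cns \<sigma> v) 1) (\<lambda>i. cns \<sigma> v (1 + i)) j"
    by (rule rn_shift)
  moreover have "rn A q (cns \<sigma> v) 1 = dt A q \<sigma>" using rn_Suc[of A q "cns \<sigma> v" 0] by simp
  moreover have "(\<lambda>i. cns \<sigma> v (1 + i)) = v" by auto
  ultimately show ?thesis by simp
qed

lemma Ld_dt: "Ld A (dt A q \<sigma>) = {v. cns \<sigma> v \<in> Ld A q}"
proof -
  have "cns \<sigma> v \<in> Ld A q \<longleftrightarrow> v \<in> Ld A (dt A q \<sigma>)" for v
  proof -
    have "cns \<sigma> v \<in> Ld A q \<longleftrightarrow> (\<lambda>i. cns \<sigma> v (1 + i)) \<in> Ld A (rn A q (cns \<sigma> v) 1)"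
      by (rule Ld_shift)
    moreover have "rn A q (cns \<sigma> v) 1 = dt A q \<sigma>" using rn_Suc[of A q "cns \<sigma> v" 0] by simp
    moreover have "(\<lambda>i. cns \<sigma> v (1 + i)) = v" by auto
    ultimately show ?thesis by simp
  qed
  then show ?thesis by auto
qed

lemma Ls_cns: "cns \<sigma> v \<in> Ls A q \<longleftrightarrow> sf A q \<sigma> \<and> v \<in> Ls A (dt A q \<sigma>)"
proof -
  have "(\<forall>i. sf A (rn A q (cns \<sigma> v) i) (cns \<sigma> v i)) \<longleftrightarrow>
        sf A q \<sigma> \<and> (\<forall>j. sf A (rn A q (cns \<sigma> v) (Suc j)) (cns \<sigma> v (Suc j)))"
    by (metis cns_0 not0_implies_Suc rn_0)
  then show ?thesis unfolding Ls_def by (simp add: rn_cns)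
qed

lemma Ld_dt_cong: "Ld A x = Ld B z \<Longrightarrow> Ld A (dt A x \<sigma>) = Ld B (dt B z \<sigma>)"
  by (simp add: Ld_dt)

lemma Ld_dl_cong: "Ld A x = Ld B z \<Longrightarrow> Ld A (dl A x u) = Ld B (dl B z u)"
proof (induction u arbitrary: x z)
  case Nil then show ?case by simp
next
  case (Cons a u)
  show ?case using Cons.IH[OF Ld_dt_cong[OF Cons.prems]] by simp
qed



lemma lang_Ld:
  assumes A: "is_tDCW A" and q: "q \<in> states A"
  shows "lang (with_init A q) = Ld A q"
proof -
  have run_eq: "r i = rn A q w i" if "is_run (with_init A q) w r" for w r i
  proof (induction i)
    case 0 then show ?case using that by (simp add: is_run_def with_init_def)
  next
    case (Suc i)
    have "r (Suc i) \<in> trans A (r i) (w i)" using that by (simp add: is_run_def with_init_def)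
    then show ?case using Suc trans_eq[OF A rn_in[OF A q]] by (simp add: rn_Suc)
  qed
  have isr: "is_run (with_init A q) w (rn A q w)" for w
    unfolding is_run_def with_init_def using trans_eq[OF A rn_in[OF A q]] by (simp add: rn_Suc)
  show ?thesis
  proof (intro set_eqI iffI)
    fix w assume "w \<in> lang (with_init A q)"
    then obtain r where r: "is_run (with_init A q) w r" "cobuchi_accepting (with_init A q) w r"
      unfolding lang_def by blast
    have "r = rn A q w" using run_eq[OF r(1)] by auto
    then show "w \<in> Ld A q" using r(2)
      by (simp add: cobuchi_accepting_def Ld_def sf_def with_init_def rn_Suc)
  next
    fix w assume "w \<in> Ld A q"
    then have "cobuchi_accepting (with_init A q) w (rn A q w)"
      by (simp add: cobuchi_accepting_def Ld_def sf_def with_init_def rn_Suc)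
    then show "w \<in> lang (with_init A q)" using isr unfolding lang_def by blast
  qed
qed

lemma lang_Ld_init:
  assumes A: "is_tDCW A"
  shows "lang A = Ld A (init A)"
proof -
  have "init A \<in> states A" using A by (simp add: is_tDCW_def wf_aut_def)
  moreover have "with_init A (init A) = A" by (simp add: with_init_def)
  ultimately show ?thesis using lang_Ld[OF A] by metis
qed

lemma safe_path_word:
  assumes A: "is_tDCW A" and x: "x \<in> states A" and p: "(x, y) \<in> (safe_edges A)\<^sup>*"
  shows "\<exists>u. sw A x u \<and> dl A x u = y"
  using p
proof (induction rule: rtrancl_induct)
  case base then show ?case by (rule exI[of _ "[]"]) simp
next
  case (step y z)
  then obtain u where u: "sw A x u" "dl A x u = y" by blast
  from step(2) obtain \<sigma> where s: "(y, \<sigma>, z) \<in> Delta A - acc A" unfolding safe_edges_def by blast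
  then have yS: "y \<in> states A" and "z \<in> trans A y \<sigma>" by (auto simp: Delta_def)
  then have "z = dt A y \<sigma>" using trans_eq[OF A yS] by simp
  then have "sf A y \<sigma>" using s by (simp add: sf_def)
  then show ?case using u \<open>z = dt A y \<sigma>\<close> by (intro exI[of _ "u @ [\<sigma>]"]) simp
qed

lemma word_safe_path:
  assumes A: "is_tDCW A" and x: "x \<in> states A" and "sw A x u"
  shows "(x, dl A x u) \<in> (safe_edges A)\<^sup>*"
  using assms(2,3)
proof (induction u arbitrary: x)
  case Nil then show ?case by simp
next
  case (Cons \<sigma> u)
  have "(x, \<sigma>, dt A x \<sigma>) \<in> Delta A - acc A"
    using Cons.prems trans_eq[OF A Cons.prems(1)] by (simp add: Delta_def sf_def)
  then have "(x, dt A x \<sigma>) \<in> safe_edges A" unfolding safe_edges_def by blast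
  moreover have "(dt A x \<sigma>, dl A x (\<sigma> # u)) \<in> (safe_edges A)\<^sup>*"
    using Cons.IH[of "dt A x \<sigma>"] Cons.prems dt_in[OF A] by simp
  ultimately show ?case by (rule converse_rtrancl_into_rtrancl)
qed

lemma path_word:
  assumes A: "is_tDCW A" and x: "x \<in> states A" and p: "(x, y) \<in> (edges A)\<^sup>*"
  shows "\<exists>u. dl A x u = y"
  using p
proof (induction rule: rtrancl_induct)
  case base then show ?case by (rule exI[of _ "[]"]) simp
next
  case (step y z)
  then obtain u where u: "dl A x u = y" by blast
  from step(2) obtain \<sigma> where s: "(y, \<sigma>, z) \<in> Delta A" unfolding edges_def by blast
  then have yS: "y \<in> states A" and "z \<in> trans A y \<sigma>" by (auto simp: Delta_def)
  then have "z = dt A y \<sigma>" using trans_eq[OF A yS] by simp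
  then show ?case using u by (intro exI[of _ "u @ [\<sigma>]"]) simp
qed

definition good :: "('s,'a) tNCW \<Rightarrow> bool" where
  "good A \<longleftrightarrow> is_tDCW A \<and> nice A"

lemma good_tDCW: "good A \<Longrightarrow> is_tDCW A" by (simp add: good_def)

lemma init_in: "is_tDCW A \<Longrightarrow> init A \<in> states A"
  by (simp add: is_tDCW_def wf_aut_def)

lemma reach_word:
  assumes "good A" "p \<in> states A"
  shows "\<exists>u. dl A (init A) u = p"
proof -
  have "(init A, p) \<in> (edges A)\<^sup>*" using assms unfolding good_def nice_def by blast
  then show ?thesis using path_word[OF good_tDCW[OF assms(1)] init_in[OF good_tDCW[OF assms(1)]]] by blast
qed

lemma back_word:
  assumes g: "good A" and x: "x \<in> states A" and u: "sw A x u"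
  shows "\<exists>v. sw A (dl A x u) v \<and> dl A (dl A x u) v = x"
proof -
  have A: "is_tDCW A" using g by (simp add: good_def)
  have "(x, dl A x u) \<in> (safe_edges A)\<^sup>*" using word_safe_path[OF A x u] .
  then have "(dl A x u, x) \<in> (safe_edges A)\<^sup>*"
    using g x dl_in[OF A x] unfolding good_def nice_def by blast
  then show ?thesis using safe_path_word[OF A dl_in[OF A x]] by blast
qed


lemma crep: "concat (replicate k c) @ c = c @ concat (replicate k c)"
  by (induction k) auto

lemma map_upt_shift: "map f [k..<k + n] = map (\<lambda>i. f (k + i)) [0..<n]"
proof -
  have "[k..<k + n] = map (\<lambda>i. i + k) [0..<n]" by (simp add: map_add_upt add.commute)
  then show ?thesis by (simp add: add.commute)
qed

lemma map_per: "c \<noteq> [] \<Longrightarrow> map (per c) [0..<k * length c] = concat (replicate k c)"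
proof (induction k)
  case 0 then show ?case by simp
next
  case (Suc k)
  have "[0..<Suc k * length c] = [0..<k * length c] @ [k * length c..<k * length c + length c]"
    by (metis add.commute mult_Suc upt_add_eq_append zero_le)
  moreover have "map (per c) [k * length c..<k * length c + length c] = c"
  proof -
    have "map (per c) [k * length c..<k * length c + length c] = map (\<lambda>i. per c (k * length c + i)) [0..<length c]"
      by (rule map_upt_shift)
    also have "\<dots> = map (\<lambda>i. c ! i) [0..<length c]"
      by (intro map_cong) (auto simp: per_def)
    also have "\<dots> = c" by (simp add: map_nth)
    finally show ?thesis .
  qed
  ultimately show ?case using Suc by (simp add: crep)
qed

lemma dl_concat_rep: "dl A x c = x \<Longrightarrow> dl A x (concat (replicate k c)) = x"
  by (induction k) auto

lemma sw_concat_rep: "dl A x c = x \<Longrightarrow> sw A x c \<Longrightarrow> sw A x (concat (replicate k c))"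
  by (induction k) auto

lemma per_shift: "c \<noteq> [] \<Longrightarrow> (\<lambda>i. per c (k * length c + i)) = per c"
  by (auto simp: per_def)

lemma rn_per_mult: "c \<noteq> [] \<Longrightarrow> dl A x c = x \<Longrightarrow> rn A x (per c) (k * length c) = x"
  unfolding rn_def prefix_word_def by (simp add: map_per dl_concat_rep)

lemma rn_per: "c \<noteq> [] \<Longrightarrow> dl A x c = x \<Longrightarrow> rn A x (per c) (k * length c + j) = rn A x (per c) j"
  using rn_shift[of A x "per c" "k * length c" j] by (simp add: rn_per_mult per_shift)

lemma per_mod: "c \<noteq> [] \<Longrightarrow> per c (k * length c + j) = per c j"
  by (simp add: per_def)

lemma per_Ls:
  assumes c: "c \<noteq> []" and d: "dl A x c = x" and s: "sw A x c"
  shows "per c \<in> Ls A x"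
proof -
  have "sf A (rn A x (per c) i) (per c i)" for i
  proof -
    have "sw A x (concat (replicate (Suc i) c))" using sw_concat_rep[OF d s] .
    moreover have "prefix_word (per c) (Suc i * length c) = concat (replicate (Suc i) c)"
      unfolding prefix_word_def by (rule map_per[OF c])
    ultimately have "sw A x (prefix_word (per c) (Suc i * length c))" by simp
    then have "\<forall>j<Suc i * length c. sf A (rn A x (per c) j) (per c j)" by (simp only: sw_prefix)
    moreover have "i < Suc i * length c" using c by (cases c) auto
    ultimately show ?thesis by blast
  qed
  then show ?thesis by (simp add: Ls_def)
qed

lemma per_not_Ld:
  assumes c: "c \<noteq> []" and d: "dl A x c = x" and s: "\<not> sw A x c"
  shows "per c \<notin> Ld A x"
proof -
  have "prefix_word (per c) (1 * length c) = concat (replicate 1 c)"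
    unfolding prefix_word_def by (rule map_per[OF c])
  then have "prefix_word (per c) (length c) = c" by simp
  then have "\<not> sw A x (prefix_word (per c) (length c))" using s by simp
  then obtain j where j: "j < length c" "\<not> sf A (rn A x (per c) j) (per c j)"
    using sw_prefix[of A x "per c" "length c"] by blast
  have "(\<lambda>k. k * length c + j) ` UNIV \<subseteq> {i. \<not> sf A (rn A x (per c) i) (per c i)}"
  proof
    fix i assume "i \<in> (\<lambda>k. k * length c + j) ` UNIV"
    then obtain k where "i = k * length c + j" by blast
    then show "i \<in> {i. \<not> sf A (rn A x (per c) i) (per c i)}"
      using j(2) rn_per[OF c d, of k j] per_mod[OF c, of k j] by simp
  qed
  moreover have "inj (\<lambda>k. k * length c + j)" using c by (auto simp: inj_def)
  then have "infinite ((\<lambda>k. k * length c + j) ` (UNIV :: nat set))"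
    using finite_imageD infinite_UNIV_nat by blast
  ultimately show ?thesis unfolding Ld_def using finite_subset by blast
qed

lemma Ls_nonempty:
  assumes g: "good A" and x: "x \<in> states A" and s: "sf A x \<sigma>"
  shows "Ls A (dt A x \<sigma>) \<noteq> {}"
proof -
  have A: "is_tDCW A" using g by (simp add: good_def)
  have "sw A x [\<sigma>]" using s by simp
  then obtain v where v: "sw A (dt A x \<sigma>) v" "dl A (dt A x \<sigma>) v = x"
    using back_word[OF g x] by fastforce
  let ?c = "v @ [\<sigma>]"
  have "sw A (dt A x \<sigma>) ?c" "dl A (dt A x \<sigma>) ?c = dt A x \<sigma>" using v s by auto
  then have "per ?c \<in> Ls A (dt A x \<sigma>)" by (intro per_Ls) auto
  then show ?thesis by blast
qed



lemma le_refl[simp]: "le A x A x" by (simp add: le_def)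
lemma le_trans: "le A x B y \<Longrightarrow> le B y C z \<Longrightarrow> le A x C z" by (auto simp: le_def)
lemma pr_eq_le: "pr A x = pr B z \<longleftrightarrow> le A x B z \<and> le B z A x"
  by (auto simp: pr_def le_def)

lemma prop1:
  assumes g: "good A" and x: "x \<in> states A" and l: "le A x B z" and s: "sf A x \<sigma>"
  shows "sf B z \<sigma> \<and> le A (dt A x \<sigma>) B (dt B z \<sigma>)"
proof -
  obtain v where v: "v \<in> Ls A (dt A x \<sigma>)" using Ls_nonempty[OF g x s] by blast
  have "cns \<sigma> v \<in> Ls A x" using v s Ls_cns[of \<sigma> v A x] by simp
  then have "cns \<sigma> v \<in> Ls B z" using l by (auto simp: le_def)
  then have sz: "sf B z \<sigma>" using Ls_cns[of \<sigma> v B z] by simp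
  have "Ls A (dt A x \<sigma>) \<subseteq> Ls B (dt B z \<sigma>)"
  proof
    fix v' assume "v' \<in> Ls A (dt A x \<sigma>)"
    then have "cns \<sigma> v' \<in> Ls A x" using s Ls_cns[of \<sigma> v' A x] by simp
    then have "cns \<sigma> v' \<in> Ls B z" using l by (auto simp: le_def)
    then show "v' \<in> Ls B (dt B z \<sigma>)" using Ls_cns[of \<sigma> v' B z] by simp
  qed
  moreover have "Ld A (dt A x \<sigma>) = Ld B (dt B z \<sigma>)" using l Ld_dt_cong[of A x B z \<sigma>] by (simp add: le_def)
  ultimately show ?thesis using sz by (simp add: le_def)
qed

lemma prop_word:
  assumes g: "good A" and x: "x \<in> states A" and l: "le A x B z" and s: "sw A x u"
  shows "sw B z u \<and> le A (dl A x u) B (dl B z u)"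
  using x l s
proof (induction u arbitrary: x z)
  case Nil then show ?case by simp
next
  case (Cons \<sigma> u)
  have A: "is_tDCW A" using g by (simp add: good_def)
  have s1: "sf A x \<sigma>" and s2: "sw A (dt A x \<sigma>) u" using Cons.prems by auto
  from prop1[OF g Cons.prems(1) Cons.prems(2) s1]
  have "sf B z \<sigma>" "le A (dt A x \<sigma>) B (dt B z \<sigma>)" by auto
  with Cons.IH[OF dt_in[OF A Cons.prems(1)] _ s2] show ?case by simp
qed

lemma prop_word_eq:
  assumes gA: "good A" and gB: "good B" and x: "x \<in> states A" and z: "z \<in> states B"
    and e: "pr A x = pr B z" and s: "sw A x u"
  shows "sw B z u \<and> pr A (dl A x u) = pr B (dl B z u)"
proof -
  have l1: "le A x B z" and l2: "le B z A x" using e pr_eq_le[of A x B z] by simp_all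
  from prop_word[OF gA x l1 s] have "sw B z u" "le A (dl A x u) B (dl B z u)" by auto
  moreover from prop_word[OF gB z l2 this(1)] have "le B (dl B z u) A (dl A x u)" by auto
  ultimately show ?thesis using pr_eq_le[of A "dl A x u" B "dl B z u"] by simp
qed

lemma SR_self: "x \<in> SR A x"
  unfolding SR_def by (auto intro!: exI[of _ "[]"])

lemma SR_in: "is_tDCW A \<Longrightarrow> x \<in> states A \<Longrightarrow> y \<in> SR A x \<Longrightarrow> y \<in> states A"
  by (auto simp: SR_def dl_in)

lemma SR_eq:
  assumes g: "good A" and x: "x \<in> states A" and y: "y \<in> SR A x"
  shows "SR A y = SR A x"
proof -
  obtain u where u: "sw A x u" "y = dl A x u" using y unfolding SR_def by blast
  obtain v where v: "sw A y v" "dl A y v = x" using back_word[OF g x u(1)] u(2) by blast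
  show ?thesis
  proof
    show "SR A y \<subseteq> SR A x"
    proof
      fix t assume "t \<in> SR A y"
      then obtain u' where "sw A y u'" "t = dl A y u'" unfolding SR_def by blast
      then show "t \<in> SR A x" unfolding SR_def using u by (auto intro!: exI[of _ "u @ u'"])
    qed
  next
    show "SR A x \<subseteq> SR A y"
    proof
      fix t assume "t \<in> SR A x"
      then obtain u' where "sw A x u'" "t = dl A x u'" unfolding SR_def by blast
      then show "t \<in> SR A y" unfolding SR_def using v by (auto intro!: exI[of _ "v @ u'"])
    qed
  qed
qed

lemma prec_refl: "prec A x A x"
  unfolding prec_def by (intro ballI bexI[of _ "x'" for x']) simp_all

lemma prec_trans: "prec A x B y \<Longrightarrow> prec B y C z \<Longrightarrow> prec A x C z"
proof -
  assume a1: "prec A x B y" and a2: "prec B y C z"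
  show "prec A x C z" unfolding prec_def
  proof
    fix x' assume "x' \<in> SR A x"
    then obtain y' where y': "y' \<in> SR B y" "le A x' B y'" using a1 unfolding prec_def by blast
    then obtain z' where z': "z' \<in> SR C z" "le B y' C z'" using a2 unfolding prec_def by blast
    show "\<exists>z'\<in>SR C z. le A x' C z'" using le_trans[OF y'(2) z'(2)] z'(1) by blast
  qed
qed

lemma prec_of_le:
  assumes g: "good A" and x: "x \<in> states A" and l: "le A x B z"
  shows "prec A x B z"
  unfolding prec_def
proof
  fix x' assume "x' \<in> SR A x"
  then obtain u where u: "sw A x u" "x' = dl A x u" unfolding SR_def by blast
  from prop_word[OF g x l u(1)] have "sw B z u" "le A x' B (dl B z u)" using u by auto
  then show "\<exists>z'\<in>SR B z. le A x' B z'" unfolding SR_def by blast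
qed

lemma prec_SR_left: "SR A x = SR A y \<Longrightarrow> prec A x B z = prec A y B z"
  unfolding prec_def by (simp only:)
lemma prec_SR_right: "SR A x = SR A y \<Longrightarrow> prec B z A x = prec B z A y"
  unfolding prec_def by (simp only:)

lemma finite_maximal:
  assumes "finite S" "S \<noteq> {}" and tr: "\<And>a b c. a \<in> S \<Longrightarrow> b \<in> S \<Longrightarrow> c \<in> S \<Longrightarrow> R a b \<Longrightarrow> R b c \<Longrightarrow> R a c"
  shows "\<exists>m\<in>S. \<forall>b\<in>S. R m b \<longrightarrow> R b m"
  using assms
proof (induction S rule: finite_ne_induct)
  case (singleton x) show ?case by auto
next
  case (insert x F)
  have trF: "R a c" if "a \<in> F" "b \<in> F" "c \<in> F" "R a b" "R b c" for a b c
    by (rule insert.prems(1)[of a b c]) (use that in simp_all)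
  have "\<exists>m\<in>F. \<forall>b\<in>F. R m b \<longrightarrow> R b m" by (rule insert.IH[OF trF])
  then obtain m where m: "m \<in> F" "\<forall>b\<in>F. R m b \<longrightarrow> R b m" by (elim bexE) 
  show ?case
  proof (cases "R m x")
    case True
    have "\<forall>b\<in>insert x F. R x b \<longrightarrow> R b x"
    proof (intro ballI impI)
      fix b assume b: "b \<in> insert x F" "R x b"
      show "R b x"
      proof (cases "b = x")
        case True then show ?thesis using b by simp
      next
        case False
        then have bF: "b \<in> F" using b by auto
        have xi: "x \<in> insert x F" by simp
        have mi: "m \<in> insert x F" using m(1) by simp
        have bi: "b \<in> insert x F" using bF by simp
        have "R m b" using insert.prems(1)[OF mi xi bi True b(2)] .
        then have "R b m" using m bF by blast
        then show ?thesis using insert.prems(1)[OF bi mi xi _ True] by blast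
      qed
    qed
    then show ?thesis by blast
  next
    case False
    then show ?thesis using m(1) m(2) by blast
  qed
qed



lemma step1:
  assumes gA: "good A" and gB: "good B" and L: "Ld A (init A) = Ld B (init B)"
    and p: "p \<in> states A"
  shows "\<exists>q\<in>states B. le A p B q"
proof (rule ccontr)
  assume neg: "\<not> (\<exists>q\<in>states B. le A p B q)"
  have A: "is_tDCW A" and B: "is_tDCW B" using gA gB by (simp_all add: good_def)
  obtain u where u: "dl A (init A) u = p" using reach_word[OF gA p] by blast
  define Q where "Q = {q \<in> states B. Ld B q = Ld A p}"
  have q0Q: "dl B (init B) u \<in> Q"
    unfolding Q_def using dl_in[OF B init_in[OF B]] Ld_dl_cong[OF L[symmetric], of u] u by simp
  have gex: "\<exists>v. sw A p v \<and> dl A p v = p \<and> \<not> sw B q v" if qQ: "q \<in> Q" for q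
  proof -
    have "\<not> Ls A p \<subseteq> Ls B q" using neg qQ unfolding Q_def le_def by auto
    then obtain z where z: "z \<in> Ls A p" "z \<notin> Ls B q" by blast
    then obtain i where i: "\<not> sf B (rn B q z i) (z i)" unfolding Ls_def by blast
    let ?x = "prefix_word z (Suc i)"
    have sx: "sw A p ?x" using z(1) sw_prefix[of A p z "Suc i"] unfolding Ls_def by simp
    have nsx: "\<not> sw B q ?x" using i sw_prefix[of B q z "Suc i"] by auto
    obtain v' where v': "sw A (dl A p ?x) v'" "dl A (dl A p ?x) v' = p" using back_word[OF gA p sx] by blast
    show ?thesis using sx nsx v' by (intro exI[of _ "?x @ v'"]) simp
  qed
  define g where "g q = (SOME v. sw A p v \<and> dl A p v = p \<and> \<not> sw B q v)" for q
  have g: "sw A p (g q) \<and> dl A p (g q) = p \<and> \<not> sw B q (g q)" if "q \<in> Q" for q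
    unfolding g_def using someI_ex[OF gex[OF that]] .
  define nxt where "nxt q = dl B q (g q)" for q
  have nxtQ: "nxt q \<in> Q" if qQ: "q \<in> Q" for q
  proof -
    have "Ld B (dl B q (g q)) = Ld A (dl A p (g q))"
      using qQ Ld_dl_cong[of B q A p "g q"] unfolding Q_def by simp
    then show ?thesis using g[OF qQ] qQ dl_in[OF B] unfolding Q_def nxt_def by simp
  qed
  define s where "s k = (nxt ^^ k) (dl B (init B) u)" for k
  have sQ: "s k \<in> Q" for k
    by (induction k) (simp_all add: s_def q0Q nxtQ)
  have sSuc: "s (Suc k) = nxt (s k)" for k by (simp add: s_def)
  have "\<not> inj_on s {0..card Q}"
  proof
    assume "inj_on s {0..card Q}"
    moreover have "s ` {0..card Q} \<subseteq> Q" using sQ by auto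
    moreover have "finite Q" unfolding Q_def using B by (simp add: is_tDCW_def wf_aut_def)
    ultimately have "card {0..card Q} \<le> card Q" using card_inj_on_le by blast
    then show False by simp
  qed
  then obtain i j where ij: "i \<in> {0..card Q}" "j \<in> {0..card Q}" "i \<noteq> j" "s i = s j"
    unfolding inj_on_def by blast
  then obtain a b where ab: "a < b" "s a = s b"
    by (metis linorder_neqE_nat)
  have ext: "\<exists>V. dl B (s a) V = s (a + n) \<and> sw A p V \<and> dl A p V = p \<and> (0 < n \<longrightarrow> \<not> sw B (s a) V)" for n
  proof (induction n)
    case 0 then show ?case by (intro exI[of _ "[]"]) simp
  next
    case (Suc n)
    then obtain V where V: "dl B (s a) V = s (a + n)" "sw A p V" "dl A p V = p" "0 < n \<longrightarrow> \<not> sw B (s a) V"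
      by blast
    let ?V = "V @ g (s (a + n))"
    have gg: "sw A p (g (s (a + n)))" "dl A p (g (s (a + n))) = p" "\<not> sw B (s (a + n)) (g (s (a + n)))"
      using g[OF sQ] by auto
    have "dl B (s a) ?V = s (a + Suc n)" using V(1) sSuc[of "a + n"] by (simp add: nxt_def)
    moreover have "sw A p ?V" "dl A p ?V = p" using V gg by simp_all
    moreover have "\<not> sw B (s a) ?V"
    proof (cases n)
      case 0 then have "V = [] \<or> True" by simp
      have "s (a + n) = dl B (s a) V" using V(1) by simp
      then show ?thesis using gg(3) by simp
    next
      case (Suc m) then show ?thesis using V(4) by simp
    qed
    ultimately show ?case by blast
  qed
  obtain V where V: "dl B (s a) V = s b" "sw A p V" "dl A p V = p" "\<not> sw B (s a) V"
    using ext[of "b - a"] ab(1) by auto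
  have Vne: "V \<noteq> []" using V(4) by auto
  have "per V \<in> Ls A p" using per_Ls[OF Vne V(3) V(2)] .
  then have "per V \<in> Ld A p" using Ls_sub_Ld[of A p] by blast
  moreover have "Ld B (s a) = Ld A p" using sQ unfolding Q_def by simp
  moreover have "per V \<notin> Ld B (s a)" using per_not_Ld[OF Vne _ V(4)] V(1) ab(2) by simp
  ultimately show False by simp
qed

definition MaxP :: "('s,'a) tNCW \<Rightarrow> bool" where
  "MaxP A \<longleftrightarrow> (\<forall>x\<in>states A. \<forall>z\<in>states A. prec A x A z \<longrightarrow> prec A z A x)"

definition SafeMin :: "('s,'a) tNCW \<Rightarrow> bool" where
  "SafeMin A \<longleftrightarrow> (\<forall>x\<in>states A. \<forall>y\<in>states A. pr A x = pr A y \<longrightarrow> x = y)"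

definition lep :: "(nat \<Rightarrow> 'a) set \<times> (nat \<Rightarrow> 'a) set \<Rightarrow> (nat \<Rightarrow> 'a) set \<times> (nat \<Rightarrow> 'a) set \<Rightarrow> bool" where
  "lep P P' \<longleftrightarrow> fst P = fst P' \<and> snd P \<subseteq> snd P'"

lemma le_lep: "le A x B z \<longleftrightarrow> lep (pr A x) (pr B z)"
  by (simp add: le_def lep_def pr_def)

lemma lep_trans: "lep a b \<Longrightarrow> lep b c \<Longrightarrow> lep a c" by (auto simp: lep_def)

lemma lep_antisym: "lep a b \<Longrightarrow> lep b a \<Longrightarrow> a = b" by (auto simp: lep_def prod_eq_iff)

lemma partner:
  assumes gA: "good A" and gB: "good B" and L: "Ld A (init A) = Ld B (init B)"
    and M: "MaxP A" and p0: "p0 \<in> states A"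
  shows "\<exists>q\<in>states B. pr A p0 = pr B q"
proof -
  have A: "is_tDCW A" and B: "is_tDCW B" using gA gB by (simp_all add: good_def)
  define XA where "XA = {x \<in> states A. prec A p0 A x}"
  define XB where "XB = {y \<in> states B. prec A p0 B y}"
  define P where "P = pr A ` XA \<union> pr B ` XB"
  have finA: "finite (states A)" and finB: "finite (states B)"
    using A B by (simp_all add: is_tDCW_def wf_aut_def)
  have "finite P" unfolding P_def XA_def XB_def using finA finB by auto
  moreover have "P \<noteq> {}" unfolding P_def XA_def using p0 prec_refl[of A p0] by blast
  ultimately obtain m where m: "m \<in> P" "\<forall>b\<in>P. lep m b \<longrightarrow> lep b m"
    using finite_maximal[of P lep] lep_trans by blast
  have "\<exists>x\<in>XA. \<forall>b\<in>P. lep (pr A x) b \<longrightarrow> lep b (pr A x)"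
  proof (cases "m \<in> pr A ` XA")
    case True then show ?thesis using m by blast
  next
    case False
    then obtain y where y: "y \<in> XB" "m = pr B y" using m(1) unfolding P_def by blast
    have yS: "y \<in> states B" using y unfolding XB_def by simp
    obtain a where a: "a \<in> states A" "le B y A a" using step1[OF gB gA L[symmetric] yS] by blast
    have "prec A p0 B y" using y unfolding XB_def by simp
    moreover have "prec B y A a" using prec_of_le[OF gB yS a(2)] .
    ultimately have "prec A p0 A a" by (rule prec_trans)
    then have aX: "a \<in> XA" using a(1) unfolding XA_def by simp
    then have "pr A a \<in> P" unfolding P_def by blast
    moreover have "lep m (pr A a)" using a(2) y(2) le_lep by metis
    ultimately have "lep (pr A a) m" using m(2) by blast
    have "\<forall>b\<in>P. lep (pr A a) b \<longrightarrow> lep b (pr A a)"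
    proof (intro ballI impI)
      fix b assume "b \<in> P" "lep (pr A a) b"
      then have "lep m b" using \<open>lep m (pr A a)\<close> lep_trans by blast
      then have "lep b m" using m(2) \<open>b \<in> P\<close> by blast
      then show "lep b (pr A a)" using \<open>lep m (pr A a)\<close> lep_trans by blast
    qed
    then show ?thesis using aX by blast
  qed
  then obtain xm where xm: "xm \<in> XA" "\<forall>b\<in>P. lep (pr A xm) b \<longrightarrow> lep b (pr A xm)" by blast
  have xmS: "xm \<in> states A" and pxm: "prec A p0 A xm" using xm(1) unfolding XA_def by auto
  then have "prec A xm A p0" using M p0 unfolding MaxP_def by blast
  then obtain p' where p': "p' \<in> SR A p0" "le A xm A p'"
    using SR_self[of xm A] unfolding prec_def by blast
  have p'S: "p' \<in> states A" using SR_in[OF A p0 p'(1)] .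
  have SRe: "SR A p' = SR A p0" using SR_eq[OF gA p0 p'(1)] .
  have pp': "prec A p0 A p'" using prec_SR_right[OF SRe, of A p0] prec_refl[of A p0] by simp
  then have "pr A p' \<in> P" using p'S unfolding P_def XA_def by blast
  moreover have "lep (pr A xm) (pr A p')" using p'(2) le_lep by metis
  ultimately have l1: "lep (pr A p') (pr A xm)" using xm(2) by blast
  obtain q where q: "q \<in> states B" "le A p' B q" using step1[OF gA gB L p'S] by blast
  have "prec A p0 B q" using prec_trans[OF pp' prec_of_le[OF gA p'S q(2)]] .
  then have "pr B q \<in> P" using q(1) unfolding P_def XB_def by blast
  moreover have "lep (pr A xm) (pr B q)" using p'(2) q(2) le_lep lep_trans by metis
  ultimately have "lep (pr B q) (pr A xm)" using xm(2) by blast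
  then have "lep (pr B q) (pr A p')" using p'(2) le_lep lep_trans by metis
  moreover have "lep (pr A p') (pr B q)" using q(2) le_lep by metis
  ultimately have eq: "pr A p' = pr B q" using lep_antisym by metis
  have "p0 \<in> SR A p'" using SRe SR_self[of p0 A] by simp
  then obtain u where u: "sw A p' u" "p0 = dl A p' u" unfolding SR_def by blast
  from prop_word_eq[OF gA gB p'S q(1) eq u(1)] have "pr A p0 = pr B (dl B q u)" using u(2) by simp
  moreover have "dl B q u \<in> states B" using dl_in[OF B q(1)] .
  ultimately show ?thesis by blast
qed



lemma canonical:
  fixes A :: "('s,'a) tNCW"
  assumes gA: "good A"
    and H: "\<forall>C::('s,'a) tNCW. wf_aut C \<and> is_GFG C \<and> lang C = lang A \<longrightarrow> card (states A) \<le> card (states C)"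
  shows "MaxP A \<and> SafeMin A"
proof -
  have A: "is_tDCW A" using gA by (simp add: good_def)
  have finA: "finite (states A)" using A by (simp add: is_tDCW_def wf_aut_def)
  define K0 where "K0 = {x \<in> states A. \<forall>z\<in>states A. prec A x A z \<longrightarrow> prec A z A x}"
  have K0S: "K0 \<subseteq> states A" unfolding K0_def by blast
  have K0_SR: "y \<in> K0" if x: "x \<in> K0" and y: "y \<in> SR A x" for x y
  proof -
    have xS: "x \<in> states A" using x K0S by blast
    have yS: "y \<in> states A" using SR_in[OF A xS y] .
    have e: "SR A y = SR A x" using SR_eq[OF gA xS y] .
    show ?thesis unfolding K0_def
    proof (intro CollectI conjI ballI impI yS)
      fix z assume z: "z \<in> states A" "prec A y A z"
      then have "prec A x A z" using prec_SR_left[OF e, of A z] by simp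
      then have "prec A z A x" using x z(1) unfolding K0_def by blast
      then show "prec A z A y" using prec_SR_right[OF e, of A z] by simp
    qed
  qed
  have cover0: "\<exists>k\<in>K0. le A x A k" if x: "x \<in> states A" for x
  proof -
    define S where "S = {z \<in> states A. prec A x A z}"
    have "finite S" unfolding S_def using finA by simp
    moreover have "S \<noteq> {}" unfolding S_def using x prec_refl[of A x] by blast
    moreover have "\<And>a b c. a \<in> S \<Longrightarrow> b \<in> S \<Longrightarrow> c \<in> S \<Longrightarrow> prec A a A b \<Longrightarrow> prec A b A c \<Longrightarrow> prec A a A c"
      using prec_trans by metis
    ultimately obtain m where m: "m \<in> S" "\<forall>b\<in>S. prec A m A b \<longrightarrow> prec A b A m"
      using finite_maximal[of S "\<lambda>a b. prec A a A b"] by blast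
    have mS: "m \<in> states A" and xm: "prec A x A m" using m(1) unfolding S_def by auto
    have mK: "m \<in> K0" unfolding K0_def
    proof (intro CollectI conjI ballI impI mS)
      fix z assume z: "z \<in> states A" "prec A m A z"
      then have "z \<in> S" using prec_trans[OF xm z(2)] unfolding S_def by blast
      then show "prec A z A m" using m(2) z(2) by blast
    qed
    obtain m' where m': "m' \<in> SR A m" "le A x A m'" using xm SR_self[of x A] unfolding prec_def by blast
    show ?thesis using K0_SR[OF mK m'(1)] m'(2) by blast
  qed
  define rep where "rep x = (SOME k. k \<in> K0 \<and> pr A k = pr A x)" for x
  have rep: "rep x \<in> K0 \<and> pr A (rep x) = pr A x" if "x \<in> K0" for x
    unfolding rep_def by (rule someI[of _ x]) (use that in simp)
  define K where "K = rep ` K0"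
  have KK0: "K \<subseteq> K0" unfolding K_def using rep by blast
  have KS: "K \<subseteq> states A" using KK0 K0S by blast
  have finK0: "finite K0" using finA K0S finite_subset by blast
  have finK: "finite K" unfolding K_def using finK0 by simp
  have E1: "\<exists>k. k \<in> K \<and> pr A k = pr A (dt A x \<sigma>)" if x: "x \<in> K" and s: "sf A x \<sigma>" for x \<sigma>
  proof -
    have "dt A x \<sigma> \<in> SR A x" unfolding SR_def using s by (intro CollectI exI[of _ "[\<sigma>]"]) simp
    then have "dt A x \<sigma> \<in> K0" using K0_SR x KK0 by blast
    then show ?thesis using rep unfolding K_def by blast
  qed
  have E2: "\<exists>k. k \<in> K \<and> le A y A k" if y: "y \<in> states A" for y
  proof -
    obtain k where k: "k \<in> K0" "le A y A k" using cover0[OF y] by blast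
    have "pr A (rep k) = pr A k" using rep[OF k(1)] by simp
    then have "le A y A (rep k)" using k(2) le_lep by metis
    then show ?thesis unfolding K_def using k(1) by blast
  qed
  define tr where "tr x \<sigma> = (if sf A x \<sigma> then {k\<in>K. pr A k = pr A (dt A x \<sigma>)} else {k\<in>K. Ld A k = Ld A (dt A x \<sigma>)})" for x \<sigma>
  define i0 where "i0 = (SOME k. k \<in> K \<and> le A (init A) A k)"
  have i0: "i0 \<in> K \<and> le A (init A) A i0"
    unfolding i0_def using someI_ex[OF E2[OF init_in[OF A]]] by blast
  define C :: "('s,'a) tNCW" where "C = \<lparr>states = K, init = i0, trans = tr,
      acc = {(x, \<sigma>, k). x \<in> K \<and> \<not> sf A x \<sigma> \<and> k \<in> K \<and> Ld A k = Ld A (dt A x \<sigma>)}\<rparr>"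
  have Cs[simp]: "states C = K" "init C = i0" "trans C = tr"
    "acc C = {(x, \<sigma>, k). x \<in> K \<and> \<not> sf A x \<sigma> \<and> k \<in> K \<and> Ld A k = Ld A (dt A x \<sigma>)}"
    by (simp_all add: C_def)
  have trK: "tr x \<sigma> \<subseteq> K" for x \<sigma> unfolding tr_def by auto
  have tr_ne: "tr x \<sigma> \<noteq> {}" if x: "x \<in> K" for x \<sigma>
  proof (cases "sf A x \<sigma>")
    case True then show ?thesis using E1[OF x True] unfolding tr_def by auto
  next
    case False
    have "dt A x \<sigma> \<in> states A" using dt_in[OF A] x KS by blast
    then obtain k where "k \<in> K" "le A (dt A x \<sigma>) A k" using E2 by blast
    then show ?thesis using False unfolding tr_def le_def by auto
  qed
  have accC: "(x, \<sigma>, k) \<in> acc C \<longleftrightarrow> \<not> sf A x \<sigma>" if "x \<in> K" "k \<in> tr x \<sigma>" for x \<sigma> k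
    using that unfolding tr_def by (auto simp: pr_def split: if_splits)
  have wfC: "wf_aut C"
    unfolding wf_aut_def Delta_def using finK i0 trK tr_ne by (auto simp: tr_def pr_def)
  define step where "step = (\<lambda>(c, a) \<sigma>. (if sf A c \<sigma> then (SOME k. k \<in> K \<and> pr A k = pr A (dt A c \<sigma>))
      else (SOME k. k \<in> K \<and> le A (dt A a \<sigma>) A k), dt A a \<sigma>))"
  define Inv where "Inv = (\<lambda>(c, a). c \<in> K \<and> a \<in> states A \<and> Ld A c = Ld A a)"
  have step_snd: "snd (step p \<sigma>) = dt A (snd p) \<sigma>" for p \<sigma>
    unfolding step_def by (cases p) simp
  have step_ok: "Inv (step p \<sigma>) \<and> fst (step p \<sigma>) \<in> tr (fst p) \<sigma>" if "Inv p" for p \<sigma>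
  proof -
    obtain c a where p: "p = (c, a)" by (cases p)
    have c: "c \<in> K" and a: "a \<in> states A" and L: "Ld A c = Ld A a" using that p unfolding Inv_def by auto
    have cS: "c \<in> states A" using c KS by blast
    have Ld1: "Ld A (dt A c \<sigma>) = Ld A (dt A a \<sigma>)" using Ld_dt_cong[OF L] .
    have da: "dt A a \<sigma> \<in> states A" using dt_in[OF A a] .
    show ?thesis
    proof (cases "sf A c \<sigma>")
      case True
      let ?k = "SOME k. k \<in> K \<and> pr A k = pr A (dt A c \<sigma>)"
      have k: "?k \<in> K \<and> pr A ?k = pr A (dt A c \<sigma>)" using someI_ex[OF E1[OF c True]] by blast
      have st: "step p \<sigma> = (?k, dt A a \<sigma>)" unfolding step_def p using True by simp
      show ?thesis unfolding st Inv_def using k True Ld1 da p by (auto simp: tr_def pr_def)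
    next
      case False
      let ?k = "SOME k. k \<in> K \<and> le A (dt A a \<sigma>) A k"
      have k: "?k \<in> K \<and> le A (dt A a \<sigma>) A ?k" using someI_ex[OF E2[OF da]] by blast
      have st: "step p \<sigma> = (?k, dt A a \<sigma>)" unfolding step_def p using False by simp
      show ?thesis unfolding st Inv_def using k False Ld1 da p by (auto simp: tr_def le_def)
    qed
  qed
  define Fs where "Fs u = foldl step (i0, init A) u" for u
  have Fs_snoc: "Fs (u @ [\<sigma>]) = step (Fs u) \<sigma>" for u \<sigma> by (simp add: Fs_def)
  have Fs_inv: "Inv (Fs u)" for u
  proof (induction u rule: rev_induct)
    case Nil then show ?case using i0 init_in[OF A] unfolding Fs_def Inv_def le_def by simp
  next
    case (snoc \<sigma> u) then show ?case using step_ok Fs_snoc by simp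
  qed
  have Fs_snd: "snd (Fs u) = dl A (init A) u" for u
  proof (induction u rule: rev_induct)
    case Nil then show ?case by (simp add: Fs_def)
  next
    case (snoc \<sigma> u) then show ?case using Fs_snoc step_snd by simp
  qed
  define f where "f u = fst (Fs u)" for u
  have f_tr: "f (u @ [\<sigma>]) \<in> tr (f u) \<sigma>" for u \<sigma>
    using step_ok[OF Fs_inv[of u]] Fs_snoc unfolding f_def by simp
  have fK: "f u \<in> K" for u using Fs_inv[of u] unfolding f_def Inv_def by (cases "Fs u") auto
  have C_sub: "w \<in> Ld A (init A)" if wC: "w \<in> lang C" for w
  proof -
    obtain r where r: "is_run C w r" "cobuchi_accepting C w r" using wC unfolding lang_def by blast
    have r0: "r 0 = i0" and rS: "r (Suc i) \<in> tr (r i) (w i)" for i using r(1) unfolding is_run_def by auto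
    define a where "a i = rn A (init A) w i" for i
    have inv: "r i \<in> K \<and> Ld A (r i) = Ld A (a i)" for i
    proof (induction i)
      case 0 then show ?case using r0 i0 unfolding a_def le_def by simp
    next
      case (Suc i)
      have "r (Suc i) \<in> K \<and> Ld A (r (Suc i)) = Ld A (dt A (r i) (w i))"
        using rS[of i] unfolding tr_def by (auto simp: pr_def split: if_splits)
      moreover have "Ld A (dt A (r i) (w i)) = Ld A (a (Suc i))"
        using Ld_dt_cong[of A "r i" A "a i" "w i"] Suc unfolding a_def by (simp add: rn_Suc)
      ultimately show ?case by simp
    qed
    have "finite {i. (r i, w i, r (Suc i)) \<in> acc C}" using r(2) unfolding cobuchi_accepting_def by simp
    then obtain N where N: "\<forall>i\<ge>N. (r i, w i, r (Suc i)) \<notin> acc C"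
      by (metis (mono_tags, lifting) finite_nat_set_iff_bounded_le mem_Collect_eq not_less_eq_eq)
    have sfr: "sf A (r i) (w i)" if "i \<ge> N" for i
      using N that accC[OF conjunct1[OF inv[of i]] rS[of i]] by blast
    have prr: "pr A (r (Suc i)) = pr A (dt A (r i) (w i))" if "i \<ge> N" for i
      using rS[of i] sfr[OF that] unfolding tr_def by simp
    define v where "v j = w (N + j)" for j
    have rNS: "r N \<in> states A" using inv[of N] KS by blast
    have eqj: "pr A (rn A (r N) v j) = pr A (r (N + j)) \<and> sf A (rn A (r N) v j) (v j)" for j
    proof (induction j)
      case 0
      then show ?case using sfr[of N] unfolding v_def by simp
    next
      case (Suc j)
      let ?y = "rn A (r N) v j" and ?x = "r (N + j)" and ?s = "v j"
      have yS: "?y \<in> states A" using rn_in[OF A rNS] .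
      have xS: "?x \<in> states A" using inv[of "N + j"] KS by blast
      have sx: "sf A ?x ?s" using sfr[of "N + j"] unfolding v_def by simp
      have l1: "le A ?x A ?y" and l2: "le A ?y A ?x" using Suc.IH pr_eq_le[of A ?y A ?x] by auto
      from prop1[OF gA xS l1 sx] have sy: "sf A ?y ?s" and l3: "le A (dt A ?x ?s) A (dt A ?y ?s)" by auto
      from prop1[OF gA yS l2 sy] have l4: "le A (dt A ?y ?s) A (dt A ?x ?s)" by auto
      have e1: "pr A (rn A (r N) v (Suc j)) = pr A (dt A ?x ?s)"
        using l3 l4 pr_eq_le[of A "dt A ?y ?s" A "dt A ?x ?s"] by (simp add: rn_Suc)
      have e2: "pr A (r (N + Suc j)) = pr A (dt A ?x ?s)" using prr[of "N + j"] unfolding v_def by simp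
      have eq: "pr A (rn A (r N) v (Suc j)) = pr A (r (N + Suc j))" using e1 e2 by simp
      have xS': "r (N + Suc j) \<in> states A" using inv[of "N + Suc j"] KS by blast
      have sx': "sf A (r (N + Suc j)) (v (Suc j))" using sfr[of "N + Suc j"] unfolding v_def by simp
      have l5: "le A (r (N + Suc j)) A (rn A (r N) v (Suc j))" using eq pr_eq_le[of A "rn A (r N) v (Suc j)" A "r (N + Suc j)"] by simp
      have "sf A (rn A (r N) v (Suc j)) (v (Suc j))" using prop1[OF gA xS' l5 sx'] by blast
      then show ?case using eq by simp
    qed
    have "v \<in> Ls A (r N)" unfolding Ls_def using eqj by blast
    then have "v \<in> Ld A (r N)" using Ls_sub_Ld[of A "r N"] by blast
    then have "v \<in> Ld A (a N)" using inv[of N] by simp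
    then show ?thesis using Ld_shift[of w A "init A" N] unfolding a_def v_def by simp
  qed
  have strat: "cobuchi_accepting C w (\<lambda>i. f (prefix_word w i))" if w: "w \<in> Ld A (init A)" for w
  proof -
    define c where "c i = f (prefix_word w i)" for i
    define a where "a i = rn A (init A) w i" for i
    have Fs_ca: "Fs (prefix_word w i) = (c i, a i)" for i
      using Fs_snd[of "prefix_word w i"] unfolding c_def f_def a_def rn_def by (cases "Fs (prefix_word w i)") simp
    have cSuc: "c (Suc i) \<in> tr (c i) (w i)" for i unfolding c_def using f_tr by (simp add: prefix_Suc)
    have stepi: "(c (Suc i), a (Suc i)) = step (c i, a i) (w i)" for i
      using Fs_ca[of "Suc i"] Fs_ca[of i] Fs_snoc by (simp add: prefix_Suc)
    have cK: "c i \<in> K" for i unfolding c_def using fK .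
    have aS: "a i \<in> states A" for i unfolding a_def using rn_in[OF A init_in[OF A]] .
    have "finite {i. \<not> sf A (a i) (w i)}" using w unfolding Ld_def a_def by simp
    then obtain N where N: "\<forall>i\<ge>N. sf A (a i) (w i)"
      by (metis (mono_tags, lifting) finite_nat_set_iff_bounded_le mem_Collect_eq not_less_eq_eq)
    have bad: "(c i, w i, c (Suc i)) \<in> acc C \<longleftrightarrow> \<not> sf A (c i) (w i)" for i
      using accC[OF cK cSuc] .
    show ?thesis
    proof (cases "\<exists>j\<ge>N. \<not> sf A (c j) (w j)")
      case False
      have "{i. (c i, w i, c (Suc i)) \<in> acc C} \<subseteq> {..<N}"
      proof
        fix i assume "i \<in> {i. (c i, w i, c (Suc i)) \<in> acc C}"
        then have "\<not> sf A (c i) (w i)" using bad by simp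
        then show "i \<in> {..<N}" using False by (metis lessThan_iff not_le)
      qed
      then show ?thesis unfolding cobuchi_accepting_def c_def using finite_subset by blast
    next
      case True
      then obtain j where j: "j \<ge> N" "\<not> sf A (c j) (w j)" by blast
      have lj: "le A (a (Suc j)) A (c (Suc j))"
      proof -
        have "c (Suc j) = (SOME k. k \<in> K \<and> le A (dt A (a j) (w j)) A k)"
          using stepi[of j] j(2) unfolding step_def by simp
        moreover have "a (Suc j) = dt A (a j) (w j)" unfolding a_def by (simp add: rn_Suc)
        ultimately show ?thesis using someI_ex[OF E2[OF dt_in[OF A aS[of j]]]] by simp
      qed
      have all: "le A (a (Suc j + n)) A (c (Suc j + n)) \<and> sf A (c (Suc j + n)) (w (Suc j + n))" for n
      proof (induction n)
        case 0
        have "sf A (a (Suc j)) (w (Suc j))" using N j(1) by simp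
        then show ?case using prop1[OF gA aS lj] lj by simp
      next
        case (Suc n)
        let ?i = "Suc j + n"
        have sa: "sf A (a ?i) (w ?i)" using N j(1) by simp
        from prop1[OF gA aS conjunct1[OF Suc.IH] sa]
        have l: "le A (dt A (a ?i) (w ?i)) A (dt A (c ?i) (w ?i))" by blast
        have "c (Suc ?i) = (SOME k. k \<in> K \<and> pr A k = pr A (dt A (c ?i) (w ?i)))"
          using stepi[of ?i] Suc.IH unfolding step_def by simp
        then have "pr A (c (Suc ?i)) = pr A (dt A (c ?i) (w ?i))"
          using someI_ex[OF E1[OF cK conjunct2[OF Suc.IH]]] by simp
        then have l2: "le A (a (Suc ?i)) A (c (Suc ?i))"
          using l unfolding a_def by (simp add: rn_Suc le_def pr_def)
        have sa2: "sf A (a (Suc ?i)) (w (Suc ?i))" using N j(1) by simp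
        have "sf A (c (Suc ?i)) (w (Suc ?i))" using prop1[OF gA aS l2 sa2] by blast
        then show ?case using l2 by simp
      qed
      have "{i. (c i, w i, c (Suc i)) \<in> acc C} \<subseteq> {..j}"
      proof
        fix i assume "i \<in> {i. (c i, w i, c (Suc i)) \<in> acc C}"
        then have ns: "\<not> sf A (c i) (w i)" using bad by simp
        show "i \<in> {..j}"
        proof (rule ccontr)
          assume "i \<notin> {..j}"
          then have "i = Suc j + (i - Suc j)" by simp
          then show False using all[of "i - Suc j"] ns by metis
        qed
      qed
      then show ?thesis unfolding cobuchi_accepting_def c_def using finite_subset by blast
    qed
  qed
  have langC: "lang C = lang A"
  proof
    show "lang C \<subseteq> lang A" using C_sub lang_Ld_init[OF A] by blast
  next
    show "lang A \<subseteq> lang C"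
    proof
      fix w assume "w \<in> lang A"
      then have w: "w \<in> Ld A (init A)" using lang_Ld_init[OF A] by simp
      have "is_run C w (\<lambda>i. f (prefix_word w i))"
        unfolding is_run_def using f_tr by (simp add: prefix_Suc f_def Fs_def prefix_word_def)
      then show "w \<in> lang C" using strat[OF w] unfolding lang_def by blast
    qed
  qed
  have gfgC: "is_GFG C"
    unfolding is_GFG_def
  proof (intro exI[of _ f] conjI allI ballI)
    show "f [] = init C" by (simp add: f_def Fs_def)
    fix u \<sigma> show "(f u, \<sigma>, f (u @ [\<sigma>])) \<in> Delta C" unfolding Delta_def using fK f_tr by simp
  next
    fix w assume "w \<in> lang C"
    then show "cobuchi_accepting C w (\<lambda>i. f (prefix_word w i))" using strat C_sub by blast
  qed
  have "card (states A) \<le> card K" using H wfC gfgC langC by auto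
  moreover have "card K \<le> card K0" unfolding K_def using finK0 card_image_le by blast
  moreover have "card K0 \<le> card (states A)" using card_mono[OF finA K0S] .
  ultimately have c1: "card K0 = card (states A)" and c2: "card (rep ` K0) = card K0"
    unfolding K_def by linarith+
  have K0A: "K0 = states A" using card_subset_eq[OF finA K0S c1] .
  have injr: "inj_on rep K0" using eq_card_imp_inj_on[OF finK0 c2] .
  have "MaxP A" unfolding MaxP_def using K0A unfolding K0_def by blast
  moreover have "SafeMin A" unfolding SafeMin_def
  proof (intro ballI impI)
    fix x y assume xy: "x \<in> states A" "y \<in> states A" "pr A x = pr A y"
    then have "rep x = rep y" unfolding rep_def by simp
    then show "x = y" using injr xy K0A unfolding inj_on_def by blast
  qed
  ultimately show ?thesis by blast
qed



lemma run_in: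
  assumes wf: "wf_aut X" and r: "is_run X w r"
  shows "r i \<in> states X"
proof (induction i)
  case 0 then show ?case using wf r by (simp add: wf_aut_def is_run_def)
next
  case (Suc i)
  have "r (Suc i) \<in> trans X (r i) (w i)" using r by (simp add: is_run_def)
  then show ?case using wf Suc unfolding wf_aut_def by blast
qed

lemma rename:
  fixes X :: "('s,'a) tNCW"
  assumes wf: "wf_aut X"
  shows "\<exists>Y :: (nat,'a) tNCW. wf_aut Y \<and> lang Y = lang X \<and> card (states Y) = card (states X) \<and>
           (is_GFG X \<longrightarrow> is_GFG Y) \<and> (is_tDCW X \<longrightarrow> is_tDCW Y)"
proof -
  have finX: "finite (states X)" using wf by (simp add: wf_aut_def)
  obtain h :: "'s \<Rightarrow> nat" where h: "bij_betw h (states X) {0..<card (states X)}"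
    using ex_bij_betw_finite_nat[OF finX] by blast
  have inj: "inj_on h (states X)" using h by (simp add: bij_betw_def)
  define hi where "hi = inv_into (states X) h"
  have hih: "hi (h a) = a" if "a \<in> states X" for a unfolding hi_def using inv_into_f_f[OF inj that] .
  define Y :: "(nat,'a) tNCW" where "Y = \<lparr>states = h ` states X, init = h (init X),
      trans = (\<lambda>q \<sigma>. h ` trans X (hi q) \<sigma>), acc = {(h a, \<sigma>, h b) | a \<sigma> b. (a, \<sigma>, b) \<in> acc X}\<rparr>"
  have Ys[simp]: "states Y = h ` states X" "init Y = h (init X)" "trans Y = (\<lambda>q \<sigma>. h ` trans X (hi q) \<sigma>)"
    "acc Y = {(h a, \<sigma>, h b) | a \<sigma> b. (a, \<sigma>, b) \<in> acc X}" by (simp_all add: Y_def)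
  have accD: "a \<in> states X \<and> b \<in> states X" if "(a, \<sigma>, b) \<in> acc X" for a \<sigma> b
    using wf that unfolding wf_aut_def Delta_def by blast
  have accY: "(h a, \<sigma>, h b) \<in> acc Y \<longleftrightarrow> (a, \<sigma>, b) \<in> acc X" if "a \<in> states X" "b \<in> states X" for a \<sigma> b
  proof
    assume "(h a, \<sigma>, h b) \<in> acc Y"
    then obtain a' b' where "(a', \<sigma>, b') \<in> acc X" "h a = h a'" "h b = h b'" by auto
    moreover then have "a' \<in> states X" "b' \<in> states X" using accD by blast+
    ultimately show "(a, \<sigma>, b) \<in> acc X" using inj that unfolding inj_on_def by metis
  qed auto
  have wfY: "wf_aut Y"
    unfolding wf_aut_def
  proof (intro conjI ballI allI)
    show "finite (states Y)" using finX by simp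
    show "init Y \<in> states Y" using wf by (simp add: wf_aut_def)
  next
    fix q \<sigma> assume "q \<in> states Y"
    then obtain a where a: "a \<in> states X" "q = h a" by auto
    then show "trans Y q \<sigma> \<noteq> {}" "trans Y q \<sigma> \<subseteq> states Y" using wf hih[OF a(1)] unfolding wf_aut_def by auto
  next
    show "acc Y \<subseteq> Delta Y"
    proof
      fix t assume "t \<in> acc Y"
      then obtain a \<sigma> b where t: "t = (h a, \<sigma>, h b)" "(a, \<sigma>, b) \<in> acc X" by auto
      then have "(a, \<sigma>, b) \<in> Delta X" using wf unfolding wf_aut_def by blast
      then have "a \<in> states X" "b \<in> trans X a \<sigma>" unfolding Delta_def by auto
      then show "t \<in> Delta Y" unfolding Delta_def t using hih by auto
    qed
  qed
  have langY: "lang Y = lang X"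
  proof
    show "lang X \<subseteq> lang Y"
    proof
      fix w assume "w \<in> lang X"
      then obtain r where r: "is_run X w r" "cobuchi_accepting X w r" unfolding lang_def by blast
      have rS: "r i \<in> states X" for i using run_in[OF wf r(1)] .
      have "is_run Y w (\<lambda>i. h (r i))"
        unfolding is_run_def using r(1) hih[OF rS] by (auto simp: is_run_def)
      moreover have "cobuchi_accepting Y w (\<lambda>i. h (r i))"
        using r(2) accY[OF rS rS] unfolding cobuchi_accepting_def by simp
      ultimately show "w \<in> lang Y" unfolding lang_def by blast
    qed
  next
    show "lang Y \<subseteq> lang X"
    proof
      fix w assume "w \<in> lang Y"
      then obtain r where r: "is_run Y w r" "cobuchi_accepting Y w r" unfolding lang_def by blast
      have rS: "r i \<in> h ` states X" for i using run_in[OF wfY r(1)] by simp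
      have hir: "hi (r i) \<in> states X" and hhi: "h (hi (r i)) = r i" for i
        using rS[of i] hih by auto
      have "is_run X w (\<lambda>i. hi (r i))"
        unfolding is_run_def
      proof (intro conjI allI)
        show "hi (r 0) = init X" using r(1) hih wf by (simp add: is_run_def wf_aut_def)
      next
        fix i
        have "r (Suc i) \<in> h ` trans X (hi (r i)) (w i)" using r(1) by (simp add: is_run_def)
        then obtain b where b: "b \<in> trans X (hi (r i)) (w i)" "r (Suc i) = h b" by auto
        have "b \<in> states X" using b(1) hir wf unfolding wf_aut_def by blast
        then show "hi (r (Suc i)) \<in> trans X (hi (r i)) (w i)" using b hih by simp
      qed
      moreover have "cobuchi_accepting X w (\<lambda>i. hi (r i))"
      proof -
        have "(r i, w i, r (Suc i)) \<in> acc Y \<longleftrightarrow> (hi (r i), w i, hi (r (Suc i))) \<in> acc X" for i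
          using accY[OF hir hir, of i "w i" "Suc i"] hhi by simp
        then show ?thesis using r(2) unfolding cobuchi_accepting_def by simp
      qed
      ultimately show "w \<in> lang X" unfolding lang_def by blast
    qed
  qed
  have cardY: "card (states Y) = card (states X)" using card_image[OF inj] by simp
  have gfg: "is_GFG Y" if g: "is_GFG X"
  proof -
    obtain f where f: "f [] = init X" "\<forall>u \<sigma>. (f u, \<sigma>, f (u @ [\<sigma>])) \<in> Delta X"
      "\<forall>w\<in>lang X. cobuchi_accepting X w (\<lambda>i. f (prefix_word w i))"
      using g unfolding is_GFG_def by blast
    have fS: "f u \<in> states X" for u using f(2) unfolding Delta_def by blast
    show ?thesis unfolding is_GFG_def
    proof (intro exI[of _ "\<lambda>u. h (f u)"] conjI allI ballI)
      show "h (f []) = init Y" using f(1) by simp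
    next
      fix u \<sigma>
      have "f (u @ [\<sigma>]) \<in> trans X (f u) \<sigma>" using f(2) unfolding Delta_def by blast
      then show "(h (f u), \<sigma>, h (f (u @ [\<sigma>]))) \<in> Delta Y" unfolding Delta_def using fS hih by auto
    next
      fix w assume "w \<in> lang Y"
      then have "cobuchi_accepting X w (\<lambda>i. f (prefix_word w i))" using f(3) langY by blast
      then show "cobuchi_accepting Y w (\<lambda>i. h (f (prefix_word w i)))"
        unfolding cobuchi_accepting_def using accY[OF fS fS] by simp
    qed
  qed
  have det: "is_tDCW Y" if d: "is_tDCW X"
    unfolding is_tDCW_def
  proof (intro conjI wfY ballI allI)
    fix q \<sigma> assume "q \<in> states Y"
    then obtain a where a: "a \<in> states X" "q = h a" by auto
    have sub: "trans X a \<sigma> \<subseteq> states X" using wf a(1) unfolding wf_aut_def by blast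
    have "card (h ` trans X a \<sigma>) = card (trans X a \<sigma>)"
      using card_image[OF inj_on_subset[OF inj sub]] .
    then show "card (trans Y q \<sigma>) = 1" using d a hih[OF a(1)] unfolding is_tDCW_def by simp
  qed
  show ?thesis using wfY langY cardY gfg det by blast
qed

lemma min_to_H:
  fixes A :: "('s,'a) tNCW"
  assumes tD: "is_tDCW A" and langA: "lang A = L"
    and minA: "\<forall>D :: (nat, 'a) tNCW. is_tDCW D \<and> lang D = L \<longrightarrow> card (states A) \<le> card (states D)"
    and pos: "tDCW_positive L"
  shows "\<forall>C::('s,'a) tNCW. wf_aut C \<and> is_GFG C \<and> lang C = lang A \<longrightarrow> card (states A) \<le> card (states C)"
proof (intro allI impI)
  fix C :: "('s,'a) tNCW" assume C: "wf_aut C \<and> is_GFG C \<and> lang C = lang A"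
  have wfA: "wf_aut A" using tD by (simp add: is_tDCW_def)
  obtain D0 :: "(nat,'a) tNCW" where D0: "is_tDCW D0" "lang D0 = L"
    using rename[OF wfA] tD langA by blast
  let ?P = "\<lambda>n. \<exists>D :: (nat, 'a) tNCW. is_tDCW D \<and> lang D = L \<and> card (states D) = n"
  have "?P (card (states D0))" using D0 by blast
  then have "?P (min_tDCW_size L)" unfolding min_tDCW_size_def by (rule LeastI)
  then obtain Ds :: "(nat,'a) tNCW" where Ds: "is_tDCW Ds" "lang Ds = L" "card (states Ds) = min_tDCW_size L"
    by blast
  have "card (states A) \<le> min_tDCW_size L" using minA Ds by metis
  also have "\<dots> \<le> min_GFG_size L" using pos by (simp add: tDCW_positive_def)
  also have "\<dots> \<le> card (states C)"
  proof -
    obtain Y :: "(nat,'a) tNCW" where Y: "wf_aut Y" "lang Y = lang C" "card (states Y) = card (states C)" "is_GFG Y"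
      using rename[of C] C by blast
    have "wf_aut Y \<and> is_GFG Y \<and> lang Y = L \<and> card (states Y) = card (states C)"
      using Y C langA by simp
    then show ?thesis unfolding min_GFG_size_def by (intro Least_le) blast
  qed
  finally show "card (states A) \<le> card (states C)" .
qed

lemma safe_succ_eq:
  assumes A: "is_tDCW A" and q: "q \<in> states A"
  shows "q' \<in> safe_succ A q \<sigma> \<longleftrightarrow> sf A q \<sigma> \<and> q' = dt A q \<sigma>"
  unfolding safe_succ_def Delta_def sf_def using trans_eq[OF A q] q by auto



theorem mainTheorem13:
  fixes L :: "(nat \<Rightarrow> 'a::finite) set"
    and A1 :: "('s1, 'a) tNCW" and A2 :: "('s2, 'a) tNCW"
  assumes "omega_regular L" and "tDCW_positive L"
    and "is_tDCW A1" and "nice A1" and "lang A1 = L"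
    and "\<forall>D :: (nat, 'a) tNCW. is_tDCW D \<and> lang D = L \<longrightarrow> card (states A1) \<le> card (states D)"
    and "is_tDCW A2" and "nice A2" and "lang A2 = L"
    and "\<forall>D :: (nat, 'a) tNCW. is_tDCW D \<and> lang D = L \<longrightarrow> card (states A2) \<le> card (states D)"
  shows "safe_isomorphic A1 A2"
proof -
  note a = assms
  have g1: "good A1" and g2: "good A2" using a by (simp_all add: good_def)
  have T1: "is_tDCW A1" and T2: "is_tDCW A2" using a by simp_all
  have Lg: "Ld A1 (init A1) = Ld A2 (init A2)" using lang_Ld_init[OF T1] lang_Ld_init[OF T2] a by simp
  have c1: "MaxP A1 \<and> SafeMin A1" using canonical[OF g1 min_to_H[OF T1 a(5) a(6) a(2)]] .
  have c2: "MaxP A2 \<and> SafeMin A2" using canonical[OF g2 min_to_H[OF T2 a(9) a(10) a(2)]] .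
  have fin1: "finite (states A1)" and fin2: "finite (states A2)"
    using T1 T2 by (simp_all add: is_tDCW_def wf_aut_def)
  have card_eq: "card (states A1) = card (states A2)"
  proof -
    have w2: "wf_aut A2" using T2 by (simp add: is_tDCW_def)
    obtain D2 :: "(nat,'a) tNCW" where D2: "is_tDCW D2" "lang D2 = L" "card (states D2) = card (states A2)"
      using rename[OF w2] T2 a(9) by blast
    have "card (states A1) \<le> card (states D2)" using a(6) D2(1,2) by blast
    then have x: "card (states A1) \<le> card (states A2)" using D2(3) by simp
    have w1: "wf_aut A1" using T1 by (simp add: is_tDCW_def)
    obtain D1 :: "(nat,'a) tNCW" where D1: "is_tDCW D1" "lang D1 = L" "card (states D1) = card (states A1)"
      using rename[OF w1] T1 a(5) by blast
    have "card (states A2) \<le> card (states D1)" using a(10) D1(1,2) by blast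
    then have "card (states A2) \<le> card (states A1)" using D1(3) by simp
    then show ?thesis using x by simp
  qed
  have part: "\<exists>q. q \<in> states A2 \<and> pr A2 q = pr A1 p" if p: "p \<in> states A1" for p
    using partner[OF g1 g2 Lg conjunct1[OF c1] p] by metis
  define \<kappa> where "\<kappa> p = (SOME q. q \<in> states A2 \<and> pr A2 q = pr A1 p)" for p
  have k: "\<kappa> p \<in> states A2 \<and> pr A2 (\<kappa> p) = pr A1 p" if "p \<in> states A1" for p
    unfolding \<kappa>_def using someI_ex[OF part[OF that]] .
  have inj: "inj_on \<kappa> (states A1)"
  proof
    fix x y assume xy: "x \<in> states A1" "y \<in> states A1" "\<kappa> x = \<kappa> y"
    then have "pr A1 x = pr A1 y" using k[OF xy(1)] k[OF xy(2)] by simp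
    then show "x = y" using c1 xy unfolding SafeMin_def by blast
  qed
  have img: "\<kappa> ` states A1 = states A2"
  proof (rule card_subset_eq[OF fin2])
    show "\<kappa> ` states A1 \<subseteq> states A2" using k by blast
    show "card (\<kappa> ` states A1) = card (states A2)" using card_image[OF inj] card_eq by simp
  qed
  have bij: "bij_betw \<kappa> (states A1) (states A2)" using inj img by (simp add: bij_betw_def)
  have fwd: "sf A2 (\<kappa> q) \<sigma> \<and> \<kappa> (dt A1 q \<sigma>) = dt A2 (\<kappa> q) \<sigma>" if q: "q \<in> states A1" and s: "sf A1 q \<sigma>" for q \<sigma>
  proof -
    have kq: "\<kappa> q \<in> states A2" and e: "pr A1 q = pr A2 (\<kappa> q)" using k[OF q] by auto
    have l1: "le A1 q A2 (\<kappa> q)" and l2: "le A2 (\<kappa> q) A1 q" using e pr_eq_le[of A1 q A2 "\<kappa> q"] by simp_all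
    from prop1[OF g1 q l1 s] have s2: "sf A2 (\<kappa> q) \<sigma>" and l3: "le A1 (dt A1 q \<sigma>) A2 (dt A2 (\<kappa> q) \<sigma>)" by auto
    from prop1[OF g2 kq l2 s2] have l4: "le A2 (dt A2 (\<kappa> q) \<sigma>) A1 (dt A1 q \<sigma>)" by auto
    have e2: "pr A1 (dt A1 q \<sigma>) = pr A2 (dt A2 (\<kappa> q) \<sigma>)" using l3 l4 pr_eq_le[of A1 "dt A1 q \<sigma>" A2 "dt A2 (\<kappa> q) \<sigma>"] by simp
    have dq: "dt A1 q \<sigma> \<in> states A1" using dt_in[OF T1 q] .
    have "pr A2 (\<kappa> (dt A1 q \<sigma>)) = pr A2 (dt A2 (\<kappa> q) \<sigma>)" using k[OF dq] e2 by simp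
    moreover have "\<kappa> (dt A1 q \<sigma>) \<in> states A2" using k[OF dq] by simp
    moreover have "dt A2 (\<kappa> q) \<sigma> \<in> states A2" using dt_in[OF T2 kq] .
    ultimately have "\<kappa> (dt A1 q \<sigma>) = dt A2 (\<kappa> q) \<sigma>" using c2 unfolding SafeMin_def by blast
    then show ?thesis using s2 by simp
  qed
  have bwd: "sf A1 q \<sigma>" if q: "q \<in> states A1" and s: "sf A2 (\<kappa> q) \<sigma>" for q \<sigma>
  proof -
    have kq: "\<kappa> q \<in> states A2" and e: "pr A1 q = pr A2 (\<kappa> q)" using k[OF q] by auto
    have l2: "le A2 (\<kappa> q) A1 q" using e pr_eq_le[of A1 q A2 "\<kappa> q"] by simp
    show ?thesis using prop1[OF g2 kq l2 s] by blast
  qed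
  show ?thesis unfolding safe_isomorphic_def
  proof (intro exI[of _ \<kappa>] conjI bij ballI allI)
    fix q q' \<sigma> assume q: "q \<in> states A1" and q': "q' \<in> states A1"
    have kq: "\<kappa> q \<in> states A2" using k[OF q] by simp
    show "q' \<in> safe_succ A1 q \<sigma> \<longleftrightarrow> \<kappa> q' \<in> safe_succ A2 (\<kappa> q) \<sigma>"
      unfolding safe_succ_eq[OF T1 q] safe_succ_eq[OF T2 kq]
    proof
      assume "sf A1 q \<sigma> \<and> q' = dt A1 q \<sigma>"
      then show "sf A2 (\<kappa> q) \<sigma> \<and> \<kappa> q' = dt A2 (\<kappa> q) \<sigma>" using fwd[OF q] by blast
    next
      assume h: "sf A2 (\<kappa> q) \<sigma> \<and> \<kappa> q' = dt A2 (\<kappa> q) \<sigma>"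
      then have s1: "sf A1 q \<sigma>" using bwd[OF q] by blast
      then have "\<kappa> (dt A1 q \<sigma>) = \<kappa> q'" using fwd[OF q s1] h by simp
      then have "dt A1 q \<sigma> = q'" using inj dt_in[OF T1 q] q' unfolding inj_on_def by blast
      then show "sf A1 q \<sigma> \<and> q' = dt A1 q \<sigma>" using s1 by simp
    qed
  qed
qed


end
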